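(* Let $I\subseteq\mathbb{R}$ be an interval, let $f:I\to\mathbb{R}$ be differentiable on the interior $I^{\circ}$, let $a,b\in I^{\circ}$ with $a<b$, assume $f'\in L[a,b]$, and let $\alpha,\lambda\in[0,1]$. Suppose that $|f'|^{q}$ is $s$-concave on $[a,b]$ for some fixed $s\in(0,1]$ and some $q>1$, and let $p$ satisfy $\frac1p+\frac1q=1$. Define $$I_f(\lambda,\alpha,a,b)=\lambda\big(\alpha f(a)+(1-\alpha)f(b)\big)+(1-\lambda)f(\alpha a+(1-\alpha)b)-\frac{1}{b-a}\int_a^b f(x)\,dx,$$ $$E_f(\alpha,q)=(1-\alpha)\left|f'\!\left(\tfrac{(1-\alpha)b+(1+\alpha)a}{2}\right)\right|^q,\qquad F_f(\alpha,q)=\alpha\left|f'\!\left(\tfrac{(2-\alpha)b+\alpha a}{2}\right)\right|^q,$$ $$\varepsilon_1(\alpha,\lambda,p)=(\alpha\lambda)^{p+1}+(1-\alpha-\alpha\lambda)^{p+1},\qquad \varepsilon_2(\alpha,\lambda,p)=(\alpha\lambda)^{p+1}-(\alpha\lambda-1+\alpha)^{p+1}.$$ Then $|I_f(\lambda,\alpha,a,b)|\leq (b-a)\,2^{\frac{s-1}{q}}\left(\frac{1}{p+1}\right)^{1/p}\cdot K$, where $K=\varepsilon_1^{1/p}(\alpha,\lambda,p)E_f^{1/q}(\alpha,q)+\varepsilon_1^{1/p}(1-\alpha,\lambda,p)F_f^{1/q}(\alpha,q)$ if $\alpha\lambda\leq 1-\alpha\leq 1-\lambda(1-\alpha)$;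 $K=\varepsilon_1^{1/p}(\alpha,\lambda,p)E_f^{1/q}(\alpha,q)+\varepsilon_2^{1/p}(1-\alpha,\lambda,p)F_f^{1/q}(\alpha,q)$ if $\alpha\lambda\leq 1-\lambda(1-\alpha)\leq 1-\alpha$; $K=\varepsilon_2^{1/p}(\alpha,\lambda,p)E_f^{1/q}(\alpha,q)+\varepsilon_1^{1/p}(1-\alpha,\lambda,p)F_f^{1/q}(\alpha,q)$ if $1-\alpha\leq\alpha\lambda\leq 1-\lambda(1-\alpha)$.
   Context: For a fixed $s\in(0,1]$, a function $g:[a,b]\to[0,\infty)$ is called $s$-concave (in the second sense) on $[a,b]$ if $g(\theta x+(1-\theta)y)\geq \theta^{s}g(x)+(1-\theta)^{s}g(y)$ for all $x,y\in[a,b]$ and all $\theta\in[0,1]$. *)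

theory Defs
  imports "HOL-Analysis.Analysis"
begin

definition s_concave_on :: "real \<Rightarrow> real set \<Rightarrow> (real \<Rightarrow> real) \<Rightarrow> bool" where
  "s_concave_on s A g \<longleftrightarrow> (\<forall>x\<in>A. g x \<ge> 0) \<and>
     (\<forall>x\<in>A. \<forall>y\<in>A. \<forall>\<theta>\<in>{0..1}.
        g (\<theta> * x + (1 - \<theta>) * y) \<ge> \<theta> powr s * g x + (1 - \<theta>) powr s * g y)"

definition I_f :: "(real \<Rightarrow> real) \<Rightarrow> real \<Rightarrow> real \<Rightarrow> real \<Rightarrow> real \<Rightarrow> real" where
  "I_f f lam \<alpha> a b = lam * (\<alpha> * f a + (1 - \<alpha>) * f b) + (1 - lam) * f (\<alpha> * a + (1 - \<alpha>) * b)
      - (1 / (b - a)) * integral {a..b} f"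

definition E_f :: "(real \<Rightarrow> real) \<Rightarrow> real \<Rightarrow> real \<Rightarrow> real \<Rightarrow> real \<Rightarrow> real" where
  "E_f f' a b \<alpha> q = (1 - \<alpha>) * \<bar>f' (((1 - \<alpha>) * b + (1 + \<alpha>) * a) / 2)\<bar> powr q"

definition F_f :: "(real \<Rightarrow> real) \<Rightarrow> real \<Rightarrow> real \<Rightarrow> real \<Rightarrow> real \<Rightarrow> real" where
  "F_f f' a b \<alpha> q = \<alpha> * \<bar>f' (((2 - \<alpha>) * b + \<alpha> * a) / 2)\<bar> powr q"

definition eps1 :: "real \<Rightarrow> real \<Rightarrow> real \<Rightarrow> real" where
  "eps1 \<alpha> lam p = (\<alpha> * lam) powr (p + 1) + (1 - \<alpha> - \<alpha> * lam) powr (p + 1)"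

definition eps2 :: "real \<Rightarrow> real \<Rightarrow> real \<Rightarrow> real" where
  "eps2 \<alpha> lam p = (\<alpha> * lam) powr (p + 1) - (\<alpha> * lam - 1 + \<alpha>) powr (p + 1)"

end

theory Submission
  imports Defs
begin
lemma pow_int_right:
  fixes k x0 x1 p :: real
  assumes "k \<le> x0" "x0 \<le> x1" "p > 0"
  shows "((\<lambda>x. \<bar>x - k\<bar> powr p) has_integral
          ((x1 - k) powr (p+1) - (x0 - k) powr (p+1)) / (p+1)) {x0..x1}"
proof -
  have "((\<lambda>x. (x - k) powr p) has_integral
          ((\<lambda>x. (x - k) powr (p+1) / (p+1)) x1 - (\<lambda>x. (x - k) powr (p+1) / (p+1)) x0)) {x0..x1}"
  proof (rule fundamental_theorem_of_calculus_interior)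
    show "continuous_on {x0..x1} (\<lambda>x. (x - k) powr (p + 1) / (p + 1))"
      using assms by (auto intro!: continuous_intros continuous_on_powr')
    fix x assume x: "x \<in> {x0<..<x1}"
    then have "x - k > 0" using assms by auto
    then have "((\<lambda>x. (x - k) powr (p + 1) / (p + 1)) has_real_derivative (x - k) powr p) (at x)"
      using assms
      by (auto intro!: derivative_eq_intros)
    then show "((\<lambda>x. (x - k) powr (p + 1) / (p + 1)) has_vector_derivative (x - k) powr p) (at x)"
      by (simp add: has_real_derivative_iff_has_vector_derivative)
  qed (use assms in auto)
  then have "((\<lambda>x. \<bar>x - k\<bar> powr p) has_integral
          ((\<lambda>x. (x - k) powr (p+1) / (p+1)) x1 - (\<lambda>x. (x - k) powr (p+1) / (p+1)) x0)) {x0..x1}"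
    by (rule has_integral_eq[rotated]) (use assms in auto)
  then show ?thesis by (simp add: diff_divide_distrib)
qed

lemma pow_int_left:
  fixes k x0 x1 p :: real
  assumes "x1 \<le> k" "x0 \<le> x1" "p > 0"
  shows "((\<lambda>x. \<bar>x - k\<bar> powr p) has_integral
          ((k - x0) powr (p+1) - (k - x1) powr (p+1)) / (p+1)) {x0..x1}"
proof -
  have "((\<lambda>x. (k - x) powr p) has_integral
          ((\<lambda>x. -((k - x) powr (p+1) / (p+1))) x1 - (\<lambda>x. -((k - x) powr (p+1) / (p+1))) x0)) {x0..x1}"
  proof (rule fundamental_theorem_of_calculus_interior)
    show "continuous_on {x0..x1} (\<lambda>x. -((k - x) powr (p + 1) / (p + 1)))"
      using assms by (auto intro!: continuous_intros continuous_on_powr')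
    fix x assume x: "x \<in> {x0<..<x1}"
    then have "k - x > 0" using assms by auto
    then have "((\<lambda>x. -((k - x) powr (p + 1) / (p + 1))) has_real_derivative (k - x) powr p) (at x)"
      using assms
      by (auto intro!: derivative_eq_intros)
    then show "((\<lambda>x. -((k - x) powr (p + 1) / (p + 1))) has_vector_derivative (k - x) powr p) (at x)"
      by (simp add: has_real_derivative_iff_has_vector_derivative)
  qed (use assms in auto)
  then have "((\<lambda>x. \<bar>x - k\<bar> powr p) has_integral
          ((\<lambda>x. -((k - x) powr (p+1) / (p+1))) x1 - (\<lambda>x. -((k - x) powr (p+1) / (p+1))) x0)) {x0..x1}"
    by (rule has_integral_eq[rotated]) (use assms in \<open>auto simp: abs_minus_commute\<close>)
  then show ?thesis by (simp add: diff_divide_distrib)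
qed

lemma pow_int_mid:
  fixes k x0 x1 p :: real
  assumes "x0 \<le> k" "k \<le> x1" "p > 0"
  shows "((\<lambda>x. \<bar>x - k\<bar> powr p) has_integral
          ((k - x0) powr (p+1) + (x1 - k) powr (p+1)) / (p+1)) {x0..x1}"
proof -
  have "((\<lambda>x. \<bar>x - k\<bar> powr p) has_integral
          ((k - x0) powr (p+1) - (k - k) powr (p+1)) / (p+1) + ((x1 - k) powr (p+1) - (k - k) powr (p+1)) / (p+1)) {x0..x1}"
    by (rule has_integral_combine[OF assms(1,2) pow_int_left pow_int_right]) (use assms in auto)
  then show ?thesis using assms by (simp add: add_divide_distrib)
qed
lemma le_zero_by_powr:
  fixes c C r :: real
  assumes "r > 0" "C \<ge> 0" "\<And>t. t > 0 \<Longrightarrow> c \<le> C * t powr (-r)"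
  shows "c \<le> 0"
proof (rule ccontr)
  assume "\<not> c \<le> 0"
  then have c: "c > 0" by simp
  show False
  proof (cases "C = 0")
    case True then show False using assms(3)[of 1] c by simp
  next
    case False
    then have C: "C > 0" using assms by simp
    define t where "t = (2 * C / c) powr (1 / r)"
    have t: "t > 0" using C c by (simp add: t_def)
    have "t powr (-r) = (2 * C / c) powr (- 1)"
      unfolding t_def using assms C c by (simp add: powr_powr)
    also have "\<dots> = c / (2 * C)" using C c by (simp add: powr_minus_divide)
    finally have "c \<le> C * (c / (2 * C))" using assms(3)[OF t] by simp
    then show False using C c by (simp add: field_simps)
  qed
qed

lemma holder_int:
  fixes u v :: "real \<Rightarrow> real" and p q :: real
  assumes pq: "p > 1" "q > 1" "1/p + 1/q = 1"
    and nn: "\<And>x. x \<in> S \<Longrightarrow> u x \<ge> 0" "\<And>x. x \<in> S \<Longrightarrow> v x \<ge> 0"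
    and int: "(\<lambda>x. u x * v x) integrable_on S" "(\<lambda>x. u x powr p) integrable_on S"
      "(\<lambda>x. v x powr q) integrable_on S"
  shows "integral S (\<lambda>x. u x * v x)
     \<le> integral S (\<lambda>x. u x powr p) powr (1/p) * integral S (\<lambda>x. v x powr q) powr (1/q)"
proof -
  define A where "A = integral S (\<lambda>x. u x powr p)"
  define B where "B = integral S (\<lambda>x. v x powr q)"
  have A0: "A \<ge> 0" unfolding A_def by (rule integral_nonneg[OF int(2)]) simp
  have B0: "B \<ge> 0" unfolding B_def by (rule integral_nonneg[OF int(3)]) simp
  have key: "integral S (\<lambda>x. u x * v x) \<le> a * b * (A / (p * a powr p) + B / (q * b powr q))"
    if ab: "a > 0" "b > 0" for a b
  proof -
    have hi: "((\<lambda>x. a * b * (u x powr p / (p * a powr p) + v x powr q / (q * b powr q))) has_integral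
       a * b * (A / (p * a powr p) + B / (q * b powr q))) S"
      unfolding A_def B_def
      by (intro has_integral_mult_right has_integral_add has_integral_divide integrable_integral int)
    show ?thesis
    proof (rule has_integral_le[OF integrable_integral[OF int(1)] hi])
      fix x assume x: "x \<in> S"
      have "u x * v x = a * b * ((u x / a) * (v x / b))" using ab by simp
      also have "\<dots> \<le> a * b * ((u x / a) powr p / p + (v x / b) powr q / q)"
        using Youngs_inequality[OF pq, of "u x / a" "v x / b"] nn[OF x] ab
        by (intro mult_left_mono) auto
      also have "\<dots> = a * b * (u x powr p / (p * a powr p) + v x powr q / (q * b powr q))"
        using nn[OF x] ab by (simp add: powr_divide mult.commute)
      finally show "u x * v x \<le> a * b * (u x powr p / (p * a powr p) + v x powr q / (q * b powr q))" .
    qed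
  qed
  have "integral S (\<lambda>x. u x * v x) \<le> A powr (1/p) * B powr (1/q)"
  proof (cases "A = 0 \<or> B = 0")
    case False
    then have A: "A > 0" and B: "B > 0" using A0 B0 by auto
    have "integral S (\<lambda>x. u x * v x) \<le> A powr (1/p) * B powr (1/q) *
        (A / (p * (A powr (1/p)) powr p) + B / (q * (B powr (1/q)) powr q))"
      using key[of "A powr (1/p)" "B powr (1/q)"] A B by simp
    also have "\<dots> = A powr (1/p) * B powr (1/q)"
      using A B pq by (simp add: powr_powr)
    finally show ?thesis .
  next
    case True
    then show ?thesis
    proof
      assume A: "A = 0"
      have "integral S (\<lambda>x. u x * v x) \<le> (B / q) * t powr (-(q - 1))" if t: "t > 0" for t
      proof -
        have "integral S (\<lambda>x. u x * v x) \<le> 1 * t * (A / (p * 1 powr p) + B / (q * t powr q))"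
          using key[of 1 t] t by simp
        also have "\<dots> = (B / q) * (t / t powr q)" using A by simp
        also have "t / t powr q = t powr (-(q-1))"
          using t by (simp add: powr_diff powr_minus_divide)
        finally show ?thesis by simp
      qed
      then have "integral S (\<lambda>x. u x * v x) \<le> 0"
        by (rule le_zero_by_powr[rotated 2]) (use pq B0 in auto)
      then show ?thesis using A by simp
    next
      assume B: "B = 0"
      have "integral S (\<lambda>x. u x * v x) \<le> (A / p) * t powr (-(p - 1))" if t: "t > 0" for t
      proof -
        have "integral S (\<lambda>x. u x * v x) \<le> t * 1 * (A / (p * t powr p) + B / (q * 1 powr q))"
          using key[of t 1] t by simp
        also have "\<dots> = (A / p) * (t / t powr p)" using B by simp
        also have "t / t powr p = t powr (-(p-1))"
          using t by (simp add: powr_diff powr_minus_divide)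
        finally show ?thesis by simp
      qed
      then have "integral S (\<lambda>x. u x * v x) \<le> 0"
        by (rule le_zero_by_powr[rotated 2]) (use pq A0 in auto)
      then show ?thesis using B by simp
    qed
  qed
  then show ?thesis by (simp add: A_def B_def)
qed
lemma reflect_integral:
  fixes g :: "real \<Rightarrow> real"
  assumes "x \<le> y" "g integrable_on {x..y}"
  shows "((\<lambda>z. g (x + y - z)) has_integral integral {x..y} g) {x..y}"
proof -
  have "((\<lambda>z. g ((-1) *\<^sub>R z + (x + y))) has_integral (1 / \<bar>-1\<bar> ^ DIM(real)) *\<^sub>R integral {x..y} g)
     ((\<lambda>z. (1 / -1) *\<^sub>R z + - ((1 / -1) *\<^sub>R (x + y))) ` cbox x y)"
    by (rule has_integral_affinity) (use assms in auto)
  moreover have "((\<lambda>z. (1 / -1) *\<^sub>R z + - ((1 / -1) *\<^sub>R (x + y))) ` cbox x y) = {x..y}"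
  proof -
    have "w \<in> (\<lambda>z. (1 / -1) *\<^sub>R z + - ((1 / -1) *\<^sub>R (x + y))) ` cbox x y" if "w \<in> {x..y}" for w
      using that by (intro image_eqI[of _ _ "x + y - w"]) auto
    then show ?thesis by auto
  qed
  ultimately show ?thesis by (simp add: algebra_simps)
qed

lemma hh_sconc:
  fixes g :: "real \<Rightarrow> real"
  assumes conc: "s_concave_on s {a..b} g" and sub: "a \<le> x" "x \<le> y" "y \<le> b"
    and int: "g integrable_on {x..y}"
  shows "integral {x..y} g \<le> (y - x) * 2 powr (s - 1) * g ((x + y) / 2)"
proof -
  have r: "((\<lambda>z. g (x + y - z)) has_integral integral {x..y} g) {x..y}"
    using reflect_integral[OF sub(2) int] .
  have pt: "(1/2) powr s * (g z + g (x + y - z)) \<le> g ((x + y) / 2)" if z: "z \<in> {x..y}" for z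
  proof -
    have hh: "g ((1/2) * z + (1 - 1/2) * (x + y - z)) \<ge> (1/2) powr s * g z + (1 - 1/2) powr s * g (x + y - z)"
    proof -
      have h: "\<forall>x\<in>{a..b}. \<forall>y\<in>{a..b}. \<forall>\<theta>\<in>{0..1}.
        g (\<theta> * x + (1 - \<theta>) * y) \<ge> \<theta> powr s * g x + (1 - \<theta>) powr s * g y"
        using conc unfolding s_concave_on_def by blast
      have "z \<in> {a..b}" "x + y - z \<in> {a..b}" "(1/2::real) \<in> {0..1}" using z sub by auto
      then show ?thesis using h by blast
    qed
    have e: "(1/2) * z + (1 - 1/2) * (x + y - z) = (x + y) / 2" by (simp add: field_simps)
    show ?thesis using hh unfolding e by (simp add: distrib_left)
  qed
  have "(1/2) powr s * (integral {x..y} g + integral {x..y} g) \<le> (y - x) * g ((x + y) / 2)"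
  proof (rule has_integral_le[OF _ _ pt])
    show "((\<lambda>z. (1/2) powr s * (g z + g (x + y - z))) has_integral
        (1/2) powr s * (integral {x..y} g + integral {x..y} g)) {x..y}"
      by (intro has_integral_mult_right has_integral_add integrable_integral int r)
    show "((\<lambda>z. g ((x + y) / 2)) has_integral (y - x) * g ((x + y) / 2)) {x..y}"
      using has_integral_const_real[of "g ((x + y) / 2)" x y] sub by (simp add: mult.commute)
  qed
  then have "2 * (1/2) powr s * integral {x..y} g \<le> (y - x) * g ((x + y) / 2)" by simp
  moreover have "2 * (1/2) powr s = 2 powr (1 - s)"
    by (simp add: powr_diff powr_divide)
  ultimately have "2 powr (1 - s) * integral {x..y} g \<le> (y - x) * g ((x + y) / 2)" by simp
  then have "integral {x..y} g \<le> (y - x) * g ((x + y) / 2) / 2 powr (1 - s)"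
    by (simp add: field_simps)
  also have "\<dots> = (y - x) * 2 powr (s - 1) * g ((x + y) / 2)"
  proof -
    have "2 powr (1 - s) * 2 powr (s - 1) = (1::real)" by (simp flip: powr_add)
    then have e: "1 / 2 powr (1 - s) = (2::real) powr (s - 1)" by (simp add: field_simps)
    have D: "(y - x) * g ((x + y) / 2) / 2 powr (1 - s) = (y - x) * (1 / 2 powr (1 - s)) * g ((x + y) / 2)"
      by simp
    show ?thesis unfolding D e by simp
  qed
  finally show ?thesis .
qed

lemma ibp_piece:
  fixes f f' :: "real \<Rightarrow> real"
  assumes deriv: "\<And>x. x \<in> {x0..x1} \<Longrightarrow> (f has_real_derivative f' x) (at x)" and le: "x0 \<le> x1"
  shows "((\<lambda>x. (x - k) * f' x) has_integral
           ((x1 - k) * f x1 - (x0 - k) * f x0 - integral {x0..x1} f)) {x0..x1}"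
proof -
  have cont: "continuous_on {x0..x1} f"
    using deriv by (meson DERIV_isCont continuous_at_imp_continuous_on)
  have h: "((\<lambda>x. f x + (x - k) * f' x) has_integral
      ((\<lambda>x. (x - k) * f x) x1 - (\<lambda>x. (x - k) * f x) x0)) {x0..x1}"
  proof (rule fundamental_theorem_of_calculus[OF le])
    fix x assume x: "x \<in> {x0..x1}"
    have "((\<lambda>x. (x - k) * f x) has_real_derivative (1 * f x + (x - k) * f' x)) (at x)"
      using deriv[OF x] by (auto intro!: derivative_eq_intros)
    then show "((\<lambda>x. (x - k) * f x) has_vector_derivative f x + (x - k) * f' x) (at x within {x0..x1})"
      by (simp add: has_real_derivative_iff_has_vector_derivative has_vector_derivative_at_within)
  qed
  have "((\<lambda>x. (f x + (x - k) * f' x) - f x) has_integral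
      (((\<lambda>x. (x - k) * f x) x1 - (\<lambda>x. (x - k) * f x) x0) - integral {x0..x1} f)) {x0..x1}"
    by (intro has_integral_diff h integrable_integral integrable_continuous_interval cont)
  then show ?thesis by simp
qed

lemma sconc_bound:
  fixes g :: "real \<Rightarrow> real"
  assumes conc: "s_concave_on s {a..b} g" and u: "u \<in> {a..b}"
  shows "g u \<le> 2 powr s * g ((a + b) / 2)"
proof -
  have h: "\<forall>x\<in>{a..b}. \<forall>y\<in>{a..b}. \<forall>\<theta>\<in>{0..1}.
    g (\<theta> * x + (1 - \<theta>) * y) \<ge> \<theta> powr s * g x + (1 - \<theta>) powr s * g y"
    and nn: "\<forall>x\<in>{a..b}. g x \<ge> 0"
    using conc unfolding s_concave_on_def by blast+
  have "a + b - u \<in> {a..b}" "(1/2::real) \<in> {0..1}" using u by auto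
  then have hh: "g ((1/2) * u + (1 - 1/2) * (a + b - u)) \<ge> (1/2) powr s * g u + (1 - 1/2) powr s * g (a + b - u)"
    using h u by blast
  have e: "(1/2) * u + (1 - 1/2) * (a + b - u) = (a + b) / 2" by (simp add: field_simps)
  have "(1/2) powr s * g u \<le> g ((a + b) / 2)"
    using hh nn \<open>a + b - u \<in> {a..b}\<close> unfolding e
    by (smt (verit) powr_ge_zero mult_nonneg_nonneg)
  moreover have "(1/2::real) powr s = 1 / 2 powr s" by (simp add: powr_divide)
  ultimately show ?thesis by (simp add: field_simps)
qed

lemma piece_bound:
  fixes f f' :: "real \<Rightarrow> real"
  assumes deriv: "\<And>x. x \<in> {a..b} \<Longrightarrow> (f has_real_derivative f' x) (at x)"
    and conc: "s_concave_on s {a..b} (\<lambda>x. \<bar>f' x\<bar> powr q)"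
    and gint: "(\<lambda>x. \<bar>f' x\<bar> powr q) integrable_on {a..b}"
    and sub: "a \<le> x0" "x0 \<le> x1" "x1 \<le> b"
    and pq: "p > 1" "q > 1" "1/p + 1/q = 1"
  shows "\<bar>(x1 - k) * f x1 - (x0 - k) * f x0 - integral {x0..x1} f\<bar>
    \<le> integral {x0..x1} (\<lambda>x. \<bar>x - k\<bar> powr p) powr (1/p) *
       ((x1 - x0) * 2 powr (s - 1) * \<bar>f' ((x0 + x1) / 2)\<bar> powr q) powr (1/q)"
proof -
  define J where "J = (x1 - k) * f x1 - (x0 - k) * f x0 - integral {x0..x1} f"
  have ibp: "((\<lambda>x. (x - k) * f' x) has_integral J) {x0..x1}"
    unfolding J_def by (rule ibp_piece) (use deriv sub in auto)
  have gi: "(\<lambda>x. \<bar>f' x\<bar> powr q) integrable_on {x0..x1}"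
    by (rule integrable_on_subinterval[OF gint]) (use sub in auto)
  have ui: "(\<lambda>x. \<bar>x - k\<bar> powr p) integrable_on {x0..x1}"
    using pq by (intro integrable_continuous_interval) (auto intro!: continuous_intros continuous_on_powr')
  have "(\<lambda>x. (x - k) * f' x) absolutely_integrable_on {x0..x1}"
  proof (rule absolutely_integrable_integrable_bound)
    show "(\<lambda>x. (x - k) * f' x) integrable_on {x0..x1}" using ibp by blast
    show "(\<lambda>x. \<bar>x - k\<bar> powr p / p + \<bar>f' x\<bar> powr q / q) integrable_on {x0..x1}"
      using has_integral_divide[OF integrable_integral[OF ui], of p]
        has_integral_divide[OF integrable_integral[OF gi], of q]
      by (intro integrable_add) blast+
    fix x show "norm ((x - k) * f' x) \<le> \<bar>x - k\<bar> powr p / p + \<bar>f' x\<bar> powr q / q"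
      using Youngs_inequality[OF pq, of "\<bar>x - k\<bar>" "\<bar>f' x\<bar>"] by (simp add: abs_mult)
  qed
  then have pi: "(\<lambda>x. \<bar>x - k\<bar> * \<bar>f' x\<bar>) integrable_on {x0..x1}"
    unfolding absolutely_integrable_on_def by (simp add: abs_mult)
  have "\<bar>J\<bar> = norm (integral {x0..x1} (\<lambda>x. (x - k) * f' x))"
    using ibp by (simp add: integral_unique)
  also have "\<dots> \<le> integral {x0..x1} (\<lambda>x. \<bar>x - k\<bar> * \<bar>f' x\<bar>)"
    by (rule integral_norm_bound_integral[OF _ pi]) (use ibp in \<open>auto simp: abs_mult\<close>)
  also have "\<dots> \<le> integral {x0..x1} (\<lambda>x. \<bar>x - k\<bar> powr p) powr (1/p) *
      integral {x0..x1} (\<lambda>x. \<bar>f' x\<bar> powr q) powr (1/q)"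
    using holder_int[OF pq, of "{x0..x1}" "\<lambda>x. \<bar>x - k\<bar>" "\<lambda>x. \<bar>f' x\<bar>"] pi ui gi by simp
  also have "\<dots> \<le> integral {x0..x1} (\<lambda>x. \<bar>x - k\<bar> powr p) powr (1/p) *
       ((x1 - x0) * 2 powr (s - 1) * \<bar>f' ((x0 + x1) / 2)\<bar> powr q) powr (1/q)"
  proof (rule mult_left_mono)
    show "integral {x0..x1} (\<lambda>x. \<bar>f' x\<bar> powr q) powr (1/q)
        \<le> ((x1 - x0) * 2 powr (s - 1) * \<bar>f' ((x0 + x1) / 2)\<bar> powr q) powr (1/q)"
      using hh_sconc[OF conc sub gi] integral_nonneg[OF gi] pq
      by (intro powr_mono2) auto
  qed simp
  finally show ?thesis unfolding J_def .
qed
lemma alg: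
  fixes d e E p q s :: real
  assumes d: "d > 0" and e: "e \<ge> 0" and E: "E \<ge> 0" and pq: "p > 0" "q > 0" "1/p + 1/q = 1"
  shows "(d powr (p+1) * e / (p+1)) powr (1/p) * (d * 2 powr (s-1) * E) powr (1/q) / d
       = d * 2 powr ((s-1)/q) * (1/(p+1)) powr (1/p) * (e powr (1/p) * E powr (1/q))"
proof -
  have p1: "p + 1 > 0" using pq by simp
  have "(d powr (p+1) * e / (p+1)) powr (1/p) = (d powr (p+1)) powr (1/p) * e powr (1/p) * (1/(p+1)) powr (1/p)"
    using d e p1 by (simp add: powr_mult powr_divide divide_inverse powr_ge_zero)
  also have "(d powr (p+1)) powr (1/p) = d powr (1 + 1/p)"
    using pq by (simp add: powr_powr field_simps)
  finally have A: "(d powr (p+1) * e / (p+1)) powr (1/p) = d powr (1 + 1/p) * e powr (1/p) * (1/(p+1)) powr (1/p)" .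
  have B: "(d * 2 powr (s-1) * E) powr (1/q) = d powr (1/q) * 2 powr ((s-1)/q) * E powr (1/q)"
    using d E by (simp add: powr_mult powr_powr)
  have C: "d powr (1 + 1/p) * d powr (1/q) / d = d"
  proof -
    have "d powr (1 + 1/p) * d powr (1/q) = d powr (1 + (1/p + 1/q))"
      using d by (simp add: powr_add[symmetric] add.assoc)
    also have "\<dots> = d * d" using d pq by (simp add: powr_add power2_eq_square)
    finally show ?thesis using d by simp
  qed
  show ?thesis unfolding A B using C d
    by (simp add: field_simps)
qed

lemma final_combine:
  fixes X A1 A2 d e1 e2 E F p q s :: real
  assumes d: "d > 0" and X: "\<bar>X\<bar> \<le> (A1 + A2) / d"
    and A1: "A1 \<le> (d powr (p+1) * e1 / (p+1)) powr (1/p) * (d * 2 powr (s-1) * E) powr (1/q)"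
    and A2: "A2 \<le> (d powr (p+1) * e2 / (p+1)) powr (1/p) * (d * 2 powr (s-1) * F) powr (1/q)"
    and nn: "e1 \<ge> 0" "e2 \<ge> 0" "E \<ge> 0" "F \<ge> 0"
    and pq: "p > 0" "q > 0" "1/p + 1/q = 1"
  shows "\<bar>X\<bar> \<le> d * 2 powr ((s-1)/q) * (1/(p+1)) powr (1/p) *
     (e1 powr (1/p) * E powr (1/q) + e2 powr (1/p) * F powr (1/q))"
proof -
  have "\<bar>X\<bar> \<le> (d powr (p+1) * e1 / (p+1)) powr (1/p) * (d * 2 powr (s-1) * E) powr (1/q) / d
      + (d powr (p+1) * e2 / (p+1)) powr (1/p) * (d * 2 powr (s-1) * F) powr (1/q) / d"
    using X A1 A2 d by (smt (verit, ccfv_SIG) add_divide_distrib divide_right_mono)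
  also have "\<dots> = d * 2 powr ((s-1)/q) * (1/(p+1)) powr (1/p) * (e1 powr (1/p) * E powr (1/q))
      + d * 2 powr ((s-1)/q) * (1/(p+1)) powr (1/p) * (e2 powr (1/p) * F powr (1/q))"
    by (simp only: alg[OF d nn(1) nn(3) pq] alg[OF d nn(2) nn(4) pq])
  finally show ?thesis by (simp add: distrib_left)
qed

theorem theorem2p5:
  fixes f f' :: "real \<Rightarrow> real" and I :: "real set"
    and a b \<alpha> lam s q p :: real
  assumes I: "is_interval I"
    and deriv: "\<forall>x\<in>interior I. (f has_real_derivative f' x) (at x)"
    and ab: "a \<in> interior I" "b \<in> interior I" "a < b"
    and L: "set_integrable lborel {a..b} f'"
    and alpha: "\<alpha> \<in> {0..1}" and lam: "lam \<in> {0..1}"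
    and s: "s \<in> {0<..1}" and q: "q > 1"
    and conc: "s_concave_on s {a..b} (\<lambda>x. \<bar>f' x\<bar> powr q)"
    and p: "1 / p + 1 / q = 1"
  shows
   "(\<alpha> * lam \<le> 1 - \<alpha> \<and> 1 - \<alpha> \<le> 1 - lam * (1 - \<alpha>) \<longrightarrow>
      \<bar>I_f f lam \<alpha> a b\<bar> \<le> (b - a) * 2 powr ((s - 1) / q) * (1 / (p + 1)) powr (1 / p) *
        (eps1 \<alpha> lam p powr (1 / p) * E_f f' a b \<alpha> q powr (1 / q)
         + eps1 (1 - \<alpha>) lam p powr (1 / p) * F_f f' a b \<alpha> q powr (1 / q))) \<and>
    (\<alpha> * lam \<le> 1 - lam * (1 - \<alpha>) \<and> 1 - lam * (1 - \<alpha>) \<le> 1 - \<alpha> \<longrightarrow>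
      \<bar>I_f f lam \<alpha> a b\<bar> \<le> (b - a) * 2 powr ((s - 1) / q) * (1 / (p + 1)) powr (1 / p) *
        (eps1 \<alpha> lam p powr (1 / p) * E_f f' a b \<alpha> q powr (1 / q)
         + eps2 (1 - \<alpha>) lam p powr (1 / p) * F_f f' a b \<alpha> q powr (1 / q))) \<and>
    (1 - \<alpha> \<le> \<alpha> * lam \<and> \<alpha> * lam \<le> 1 - lam * (1 - \<alpha>) \<longrightarrow>
      \<bar>I_f f lam \<alpha> a b\<bar> \<le> (b - a) * 2 powr ((s - 1) / q) * (1 / (p + 1)) powr (1 / p) *
        (eps2 \<alpha> lam p powr (1 / p) * E_f f' a b \<alpha> q powr (1 / q)
         + eps1 (1 - \<alpha>) lam p powr (1 / p) * F_f f' a b \<alpha> q powr (1 / q)))"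
proof -
  have q0: "q > 0" using q by simp
  have p1: "p > 1"
  proof -
    have "1 / p = 1 - 1 / q" using p by simp
    moreover have "0 < 1 - 1/q" "1 - 1/q < 1" using q by (auto simp: field_simps)
    ultimately have "0 < 1/p" "1/p < 1" by auto
    then show ?thesis by (smt (verit) divide_less_eq_1 zero_less_divide_1_iff)
  qed
  have p0: "p > 0" using p1 by simp
  have pq: "p > 1" "q > 1" "1/p + 1/q = 1" using p1 q p by auto
  have isI: "is_interval (interior I)" using I by (metis convex_interior is_interval_convex is_interval_convex_1)
  have deriv': "(f has_real_derivative f' x) (at x)" if x: "x \<in> {a..b}" for x
  proof -
    have "x \<in> interior I" using mem_is_interval_1_I[OF isI ab(1) ab(2)] x by auto
    then show ?thesis using deriv by blast
  qed
  define g where "g = (\<lambda>x. \<bar>f' x\<bar> powr q)"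
  have gint: "(\<lambda>x. \<bar>f' x\<bar> powr q) integrable_on {a..b}"
  proof -
    have "(f' has_integral (f b - f a)) {a..b}"
      using ab(3) deriv'
      by (intro fundamental_theorem_of_calculus)
         (auto simp: has_real_derivative_iff_has_vector_derivative[symmetric]
               intro: has_field_derivative_at_within)
    then have "f' \<in> borel_measurable (lebesgue_on {a..b})"
      by (intro integrable_imp_measurable) blast
    then have meas: "(\<lambda>x. \<bar>f' x\<bar> powr q) \<in> borel_measurable (lebesgue_on {a..b})"
      by (rule measurable_abs_powr)
    show ?thesis
    proof (rule measurable_bounded_by_integrable_imp_integrable_real[OF meas])
      show "(\<lambda>x. 2 powr s * \<bar>f' ((a + b) / 2)\<bar> powr q) integrable_on {a..b}"
        by (rule integrable_const_ivl)
      fix x assume "x \<in> {a..b}"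
      then show "\<bar>\<bar>f' x\<bar> powr q\<bar> \<le> 2 powr s * \<bar>f' ((a + b) / 2)\<bar> powr q"
        using sconc_bound[OF conc] by simp
    qed simp
  qed
  define m where "m = \<alpha> * a + (1 - \<alpha>) * b"
  define k1 where "k1 = a + \<alpha> * lam * (b - a)"
  define k2 where "k2 = a + (1 - lam * (1 - \<alpha>)) * (b - a)"
  define J1 where "J1 = (m - k1) * f m - (a - k1) * f a - integral {a..m} f"
  define J2 where "J2 = (b - k2) * f b - (m - k2) * f m - integral {m..b} f"
  have am: "a \<le> m" "m \<le> b"
  proof -
    have "m = a + (1 - \<alpha>) * (b - a)" "m = b - \<alpha> * (b - a)" unfolding m_def by (simp_all add: algebra_simps)
    moreover have "(1 - \<alpha>) * (b - a) \<ge> 0" "\<alpha> * (b - a) \<ge> 0" using alpha ab(3) by auto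
    ultimately show "a \<le> m" "m \<le> b" by linarith+
  qed
  have P1: "\<bar>J1\<bar> \<le> integral {a..m} (\<lambda>x. \<bar>x - k1\<bar> powr p) powr (1/p) *
       ((m - a) * 2 powr (s - 1) * \<bar>f' ((a + m) / 2)\<bar> powr q) powr (1/q)"
    unfolding J1_def by (rule piece_bound[OF deriv' conc gint _ _ _ pq]) (use am in auto)
  have P2: "\<bar>J2\<bar> \<le> integral {m..b} (\<lambda>x. \<bar>x - k2\<bar> powr p) powr (1/p) *
       ((b - m) * 2 powr (s - 1) * \<bar>f' ((m + b) / 2)\<bar> powr q) powr (1/q)"
    unfolding J2_def by (rule piece_bound[OF deriv' conc gint _ _ _ pq]) (use am in auto)
  have fint: "f integrable_on {a..b}"
    using deriv' by (intro integrable_continuous_interval)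
      (meson DERIV_isCont continuous_at_imp_continuous_on)
  have comb: "integral {a..m} f + integral {m..b} f = integral {a..b} f"
    by (rule Henstock_Kurzweil_Integration.integral_combine[OF am fint])
  have ident: "(b - a) * I_f f lam \<alpha> a b = J1 + J2"
  proof -
    have "(b - a) * I_f f lam \<alpha> a b = (b - a) * (lam * (\<alpha> * f a + (1 - \<alpha>) * f b) + (1 - lam) * f m)
        - integral {a..b} f"
      unfolding I_f_def m_def using ab(3) by (simp add: field_simps)
    also have "\<dots> = J1 + J2"
      unfolding J1_def J2_def comb[symmetric] k1_def k2_def m_def by (simp add: algebra_simps)
    finally show ?thesis .
  qed
  have core: "\<bar>I_f f lam \<alpha> a b\<bar> \<le> (\<bar>J1\<bar> + \<bar>J2\<bar>) / (b - a)"
  proof -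
    have "I_f f lam \<alpha> a b = (J1 + J2) / (b - a)" using ident ab(3) by (simp add: field_simps)
    then show ?thesis using ab(3) by (simp add: divide_right_mono)
  qed
  have G1: "(m - a) * 2 powr (s - 1) * \<bar>f' ((a + m) / 2)\<bar> powr q = (b - a) * 2 powr (s - 1) * E_f f' a b \<alpha> q"
  proof -
    have "(a + m) / 2 = ((1 - \<alpha>) * b + (1 + \<alpha>) * a) / 2" unfolding m_def by (simp add: algebra_simps)
    then show ?thesis unfolding E_f_def m_def by (simp add: algebra_simps)
  qed
  have G2: "(b - m) * 2 powr (s - 1) * \<bar>f' ((m + b) / 2)\<bar> powr q = (b - a) * 2 powr (s - 1) * F_f f' a b \<alpha> q"
  proof -
    have "(m + b) / 2 = ((2 - \<alpha>) * b + \<alpha> * a) / 2" unfolding m_def by (simp add: algebra_simps)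
    then show ?thesis unfolding F_f_def m_def by (simp add: algebra_simps)
  qed
  have En: "E_f f' a b \<alpha> q \<ge> 0" "F_f f' a b \<alpha> q \<ge> 0" using alpha by (auto simp: E_f_def F_f_def)
  have d: "b - a > 0" using ab by simp
  have pmul: "(x * (b - a)) powr (p + 1) = (b - a) powr (p + 1) * x powr (p + 1)" if "x \<ge> 0" for x
    using that d by (simp add: powr_mult mult.commute)
  have I1a: "integral {a..m} (\<lambda>x. \<bar>x - k1\<bar> powr p) = (b - a) powr (p + 1) * eps1 \<alpha> lam p / (p + 1)"
    if c: "\<alpha> * lam \<le> 1 - \<alpha>"
  proof -
    have e1: "k1 - a = (\<alpha> * lam) * (b - a)" "m - k1 = (1 - \<alpha> - \<alpha> * lam) * (b - a)"
      unfolding k1_def m_def by (simp_all add: algebra_simps)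
    have nn: "\<alpha> * lam \<ge> 0" "1 - \<alpha> - \<alpha> * lam \<ge> 0" using alpha lam c by auto
    have "(\<alpha> * lam) * (b - a) \<ge> 0" "(1 - \<alpha> - \<alpha> * lam) * (b - a) \<ge> 0"
      using nn d by simp_all
    then have "a \<le> k1" "k1 \<le> m" using e1 by linarith+
    then have "integral {a..m} (\<lambda>x. \<bar>x - k1\<bar> powr p) = ((k1 - a) powr (p+1) + (m - k1) powr (p+1)) / (p+1)"
      using p0 by (intro integral_unique pow_int_mid)
    also have "\<dots> = (b - a) powr (p + 1) * eps1 \<alpha> lam p / (p + 1)"
      unfolding e1 pmul[OF nn(1)] pmul[OF nn(2)] eps1_def by (simp only: distrib_left)
    finally show ?thesis .
  qed
  have I1b: "integral {a..m} (\<lambda>x. \<bar>x - k1\<bar> powr p) = (b - a) powr (p + 1) * eps2 \<alpha> lam p / (p + 1)"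
    if c: "1 - \<alpha> \<le> \<alpha> * lam"
  proof -
    have e1: "k1 - a = (\<alpha> * lam) * (b - a)" "k1 - m = (\<alpha> * lam - 1 + \<alpha>) * (b - a)"
      unfolding k1_def m_def by (simp_all add: algebra_simps)
    have nn: "\<alpha> * lam \<ge> 0" "\<alpha> * lam - 1 + \<alpha> \<ge> 0" using alpha lam c by auto
    have "(\<alpha> * lam - 1 + \<alpha>) * (b - a) \<ge> 0" using nn d by simp
    then have "m \<le> k1" using e1 by linarith
    then have "integral {a..m} (\<lambda>x. \<bar>x - k1\<bar> powr p) = ((k1 - a) powr (p+1) - (k1 - m) powr (p+1)) / (p+1)"
      using p0 am by (intro integral_unique pow_int_left)
    also have "\<dots> = (b - a) powr (p + 1) * eps2 \<alpha> lam p / (p + 1)"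
      unfolding e1 pmul[OF nn(1)] pmul[OF nn(2)] eps2_def by (simp only: right_diff_distrib)
    finally show ?thesis .
  qed
  have I2a: "integral {m..b} (\<lambda>x. \<bar>x - k2\<bar> powr p) = (b - a) powr (p + 1) * eps1 (1 - \<alpha>) lam p / (p + 1)"
    if c: "1 - \<alpha> \<le> 1 - lam * (1 - \<alpha>)"
  proof -
    have e1: "b - k2 = ((1 - \<alpha>) * lam) * (b - a)" "k2 - m = (1 - (1 - \<alpha>) - (1 - \<alpha>) * lam) * (b - a)"
      unfolding k2_def m_def by (simp_all add: algebra_simps)
    have nn: "(1 - \<alpha>) * lam \<ge> 0" "1 - (1 - \<alpha>) - (1 - \<alpha>) * lam \<ge> 0"
      using alpha lam c by (auto intro!: mult_nonneg_nonneg simp: mult.commute)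
    have "((1 - \<alpha>) * lam) * (b - a) \<ge> 0" "(1 - (1 - \<alpha>) - (1 - \<alpha>) * lam) * (b - a) \<ge> 0"
      using nn d by simp_all
    then have "m \<le> k2" "k2 \<le> b" using e1 by linarith+
    then have "integral {m..b} (\<lambda>x. \<bar>x - k2\<bar> powr p) = ((k2 - m) powr (p+1) + (b - k2) powr (p+1)) / (p+1)"
      using p0 by (intro integral_unique pow_int_mid)
    also have "\<dots> = (b - a) powr (p + 1) * eps1 (1 - \<alpha>) lam p / (p + 1)"
      unfolding e1 pmul[OF nn(1)] pmul[OF nn(2)] eps1_def by (simp only: distrib_left add.commute)
    finally show ?thesis .
  qed
  have I2b: "integral {m..b} (\<lambda>x. \<bar>x - k2\<bar> powr p) = (b - a) powr (p + 1) * eps2 (1 - \<alpha>) lam p / (p + 1)"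
    if c: "1 - lam * (1 - \<alpha>) \<le> 1 - \<alpha>"
  proof -
    have e1: "b - k2 = ((1 - \<alpha>) * lam) * (b - a)" "m - k2 = ((1 - \<alpha>) * lam - 1 + (1 - \<alpha>)) * (b - a)"
      unfolding k2_def m_def by (simp_all add: algebra_simps)
    have nn: "(1 - \<alpha>) * lam \<ge> 0" "(1 - \<alpha>) * lam - 1 + (1 - \<alpha>) \<ge> 0"
      using alpha lam c by (auto intro!: mult_nonneg_nonneg simp: mult.commute)
    have "((1 - \<alpha>) * lam - 1 + (1 - \<alpha>)) * (b - a) \<ge> 0" using nn d by simp
    then have "k2 \<le> m" using e1 by linarith
    then have "integral {m..b} (\<lambda>x. \<bar>x - k2\<bar> powr p) = ((b - k2) powr (p+1) - (m - k2) powr (p+1)) / (p+1)"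
      using p0 am by (intro integral_unique pow_int_right)
    also have "\<dots> = (b - a) powr (p + 1) * eps2 (1 - \<alpha>) lam p / (p + 1)"
      unfolding e1 pmul[OF nn(1)] pmul[OF nn(2)] eps2_def by (simp only: right_diff_distrib)
    finally show ?thesis .
  qed
  have e1n: "eps1 x y p \<ge> 0" for x y unfolding eps1_def by simp
  have e2n: "eps2 x y p \<ge> 0" if "0 \<le> x * y - 1 + x" "x * y - 1 + x \<le> x * y" for x y
    unfolding eps2_def using that p0 by (simp add: powr_mono2)
  show ?thesis
  proof (intro conjI impI)
    assume c: "\<alpha> * lam \<le> 1 - \<alpha> \<and> 1 - \<alpha> \<le> 1 - lam * (1 - \<alpha>)"
    show "\<bar>I_f f lam \<alpha> a b\<bar> \<le> (b - a) * 2 powr ((s - 1) / q) * (1 / (p + 1)) powr (1 / p) *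
        (eps1 \<alpha> lam p powr (1 / p) * E_f f' a b \<alpha> q powr (1 / q)
         + eps1 (1 - \<alpha>) lam p powr (1 / p) * F_f f' a b \<alpha> q powr (1 / q))"
      by (rule final_combine[OF d core _ _ e1n e1n En p0 q0 p])
         (use P1 P2 I1a I2a G1 G2 c in auto)
  next
    assume c: "\<alpha> * lam \<le> 1 - lam * (1 - \<alpha>) \<and> 1 - lam * (1 - \<alpha>) \<le> 1 - \<alpha>"
    have c1: "\<alpha> * lam \<le> 1 - \<alpha>" using c by linarith
    have n2: "eps2 (1 - \<alpha>) lam p \<ge> 0" using c alpha lam by (intro e2n) (auto simp: algebra_simps)
    show "\<bar>I_f f lam \<alpha> a b\<bar> \<le> (b - a) * 2 powr ((s - 1) / q) * (1 / (p + 1)) powr (1 / p) *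
        (eps1 \<alpha> lam p powr (1 / p) * E_f f' a b \<alpha> q powr (1 / q)
         + eps2 (1 - \<alpha>) lam p powr (1 / p) * F_f f' a b \<alpha> q powr (1 / q))"
      by (rule final_combine[OF d core _ _ e1n n2 En p0 q0 p])
         (use P1 P2 I1a[OF c1] I2b G1 G2 c in auto)
  next
    assume c: "1 - \<alpha> \<le> \<alpha> * lam \<and> \<alpha> * lam \<le> 1 - lam * (1 - \<alpha>)"
    have c2: "1 - \<alpha> \<le> 1 - lam * (1 - \<alpha>)" using c by linarith
    have n2: "eps2 \<alpha> lam p \<ge> 0" using c alpha lam by (intro e2n) (auto simp: algebra_simps)
    show "\<bar>I_f f lam \<alpha> a b\<bar> \<le> (b - a) * 2 powr ((s - 1) / q) * (1 / (p + 1)) powr (1 / p) *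
        (eps2 \<alpha> lam p powr (1 / p) * E_f f' a b \<alpha> q powr (1 / q)
         + eps1 (1 - \<alpha>) lam p powr (1 / p) * F_f f' a b \<alpha> q powr (1 / q))"
      by (rule final_combine[OF d core _ _ n2 e1n En p0 q0 p])
         (use P1 P2 I1b I2a[OF c2] G1 G2 c in auto)
  qed
qed

end
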